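(* For every natural number $l$, the double subdivided star $T_{l,l}$ exhibits pretty good state transfer between its two coalescence vertices $a$ and $b$ with respect to a sequence in $(4\mathbb{Z}-1)\frac{\pi}{2}$; that is, there is a sequence $(\tau_k)$ with each $\tau_k\in\{(4n-1)\pi/2: n\in\mathbb{Z}\}$ and some $\gamma\in\mathbb{C}$ such that $\lim_{k\to\infty}U(\tau_k)\mathbf{e}_a=\gamma\mathbf{e}_b$.
   Context: A subdivided star $SK_{1,l}$ is obtained by identifying exactly one pendant (end) vertex from each of $l$ copies of the path $P_3$; the identified vertex is the coalescence vertex. The double subdivided star $T_{l,m}$ is obtained from $SK_{1,l}$ and $SK_{1,m}$ by adding one edge joining their two coalescence vertices; in $T_{l,l}$ these are the two vertices of degree $l+1$ joined by that edge (for $l=1$, the two middle vertices of the path $P_6$). For a graph with adjacency matrix $A$, $U(t)=\exp(itA)$, $t\in\mathbb{R}$, and $\mathbf{e}_a$ is the standard basis vector of vertex $a$. Pretty good state transfer between distinct vertices $a,b$ means there exist real $\tau_k$ and $\gamma\in\mathbb{C}$ with $\lim_{k\to\infty}U(\tau_k)\mathbf{e}_a=\gamma\mathbf{e}_b$. *)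

theory Defs
  imports "HOL-Analysis.Analysis"
begin

text \<open>Graphs on a finite vertex set V with adjacency matrix given as a function
  A :: 'v => 'v => complex (entries outside V are irrelevant).\<close>

fun mat_pow :: "'v set \<Rightarrow> ('v \<Rightarrow> 'v \<Rightarrow> complex) \<Rightarrow> nat \<Rightarrow> 'v \<Rightarrow> 'v \<Rightarrow> complex" where
  "mat_pow V A 0 x y = (if x = y then 1 else 0)"
| "mat_pow V A (Suc n) x y = (\<Sum>z\<in>V. A x z * mat_pow V A n z y)"

definition trans_mat :: "'v set \<Rightarrow> ('v \<Rightarrow> 'v \<Rightarrow> complex) \<Rightarrow> real \<Rightarrow> 'v \<Rightarrow> 'v \<Rightarrow> complex" where
  "trans_mat V A t x y = (\<Sum>n. (\<i> * complex_of_real t) ^ n / fact n * mat_pow V A n x y)"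

text \<open>U(t) e_a as a vector indexed by V: its y-entry is U(t)_{y,a}.
  Convergence of vectors in the finite-dimensional space C^V is entrywise convergence.\<close>
definition pgst_along :: "'v set \<Rightarrow> ('v \<Rightarrow> 'v \<Rightarrow> complex) \<Rightarrow> 'v \<Rightarrow> 'v \<Rightarrow> (nat \<Rightarrow> real) \<Rightarrow> complex \<Rightarrow> bool" where
  "pgst_along V A a b \<tau> \<gamma> \<longleftrightarrow>
     (\<forall>y\<in>V. (\<lambda>k. trans_mat V A (\<tau> k) y a) \<longlonglongrightarrow> (if y = b then \<gamma> else 0))"

text \<open>Vertices of the double subdivided star T_{l,m}: side False/True,
  coalescence vertex Cen s, and for each branch i the middle vertex Mid s i
  and the pendant vertex Leaf s i (each branch is a copy of P_3: Cen - Mid - Leaf).\<close>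
datatype dsvtx = Cen bool | Mid bool nat | Leaf bool nat

definition dss_vertices :: "nat \<Rightarrow> nat \<Rightarrow> dsvtx set" where
  "dss_vertices l m = {Cen False, Cen True}
     \<union> {Mid False i | i. i < l} \<union> {Leaf False i | i. i < l}
     \<union> {Mid True i | i. i < m} \<union> {Leaf True i | i. i < m}"

fun dss_edge :: "dsvtx \<Rightarrow> dsvtx \<Rightarrow> bool" where
  "dss_edge (Cen s) (Cen s') = (s \<noteq> s')"
| "dss_edge (Cen s) (Mid s' i) = (s = s')"
| "dss_edge (Mid s i) (Cen s') = (s = s')"
| "dss_edge (Mid s i) (Leaf s' j) = (s = s' \<and> i = j)"
| "dss_edge (Leaf s i) (Mid s' j) = (s = s' \<and> i = j)"
| "dss_edge _ _ = False"

definition dss_adj :: "nat \<Rightarrow> nat \<Rightarrow> dsvtx \<Rightarrow> dsvtx \<Rightarrow> complex" where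
  "dss_adj l m x y =
     (if x \<in> dss_vertices l m \<and> y \<in> dss_vertices l m \<and> dss_edge x y then 1 else 0)"

end

theory Submission
  imports Defs
begin

lemma mem_V: "y \<in> dss_vertices l l \<longleftrightarrow> (case y of Cen s \<Rightarrow> True | Mid s i \<Rightarrow> i < l | Leaf s i \<Rightarrow> i < l)"
  by (cases y; cases "fst (case y of Cen s \<Rightarrow> (s, 0) | Mid s i \<Rightarrow> (s,i) | Leaf s i \<Rightarrow> (s,i))") (auto simp: dss_vertices_def)

lemma V_eq: "dss_vertices l l = {Cen False, Cen True} \<union> (\<lambda>(s,i). Mid s i) ` (UNIV \<times> {..<l}) \<union> (\<lambda>(s,i). Leaf s i) ` (UNIV \<times> {..<l})"
  by (auto simp: dss_vertices_def image_iff)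

lemma finite_V: "finite (dss_vertices l l)"
  unfolding V_eq by simp

lemma nbr_sum:
  fixes F :: "dsvtx \<Rightarrow> complex"
  assumes y: "y \<in> dss_vertices l l"
  shows "(\<Sum>z\<in>dss_vertices l l. dss_adj l l y z * F z) =
    (case y of Cen s \<Rightarrow> F (Cen (\<not> s)) + (\<Sum>i<l. F (Mid s i))
             | Mid s i \<Rightarrow> F (Cen s) + F (Leaf s i)
             | Leaf s i \<Rightarrow> F (Mid s i))"
proof -
  let ?V = "dss_vertices l l"
  have "(\<Sum>z\<in>?V. dss_adj l l y z * F z) = (\<Sum>z\<in>{z\<in>?V. dss_edge y z}. F z)"
  proof -
    have "(\<Sum>z\<in>?V. dss_adj l l y z * F z) = (\<Sum>z\<in>?V. if dss_edge y z then F z else 0)"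
      by (rule sum.cong) (auto simp: dss_adj_def y)
    also have "\<dots> = (\<Sum>z\<in>{z\<in>?V. dss_edge y z}. F z)"
      by (rule sum.inter_filter[OF finite_V, symmetric])
    finally show ?thesis .
  qed
  also have "\<dots> = (case y of Cen s \<Rightarrow> F (Cen (\<not> s)) + (\<Sum>i<l. F (Mid s i))
             | Mid s i \<Rightarrow> F (Cen s) + F (Leaf s i)
             | Leaf s i \<Rightarrow> F (Mid s i))"
  proof (cases y)
    case (Cen s)
    have "{z\<in>?V. dss_edge y z} = insert (Cen (\<not> s)) (Mid s ` {..<l})"
      proof (rule set_eqI)
      fix z show "z \<in> {z\<in>?V. dss_edge y z} \<longleftrightarrow> z \<in> insert (Cen (\<not> s)) (Mid s ` {..<l})"
        by (cases z) (auto simp: Cen mem_V)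
    qed
    moreover have "(\<Sum>z\<in>Mid s ` {..<l}. F z) = (\<Sum>i<l. F (Mid s i))"
      by (subst sum.reindex) (auto simp: inj_on_def)
    moreover have "Cen (\<not> s) \<notin> Mid s ` {..<l}" by auto
    ultimately show ?thesis using Cen by (simp add: sum.insert)
  next
    case (Mid s i)
    have "{z\<in>?V. dss_edge y z} = {Cen s, Leaf s i}"
      proof (rule set_eqI)
      fix z show "z \<in> {z\<in>?V. dss_edge y z} \<longleftrightarrow> z \<in> {Cen s, Leaf s i}"
        using y by (cases z) (auto simp: Mid mem_V)
    qed
    then show ?thesis using Mid by simp
  next
    case (Leaf s i)
    have "{z\<in>?V. dss_edge y z} = {Mid s i}"
      proof (rule set_eqI)
      fix z show "z \<in> {z\<in>?V. dss_edge y z} \<longleftrightarrow> z \<in> {Mid s i}"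
        using y by (cases z) (auto simp: Leaf mem_V)
    qed
    then show ?thesis using Leaf by simp
  qed
  finally show ?thesis .
qed

definition cp :: "nat \<Rightarrow> real \<Rightarrow> real" where
  "cp l x = x^3 - x^2 - (real l + 1) * x + 1"

definition W :: "real \<Rightarrow> dsvtx \<Rightarrow> complex" where
  "W lam v = (case v of Cen s \<Rightarrow> of_real (lam^2 - 1) | Mid s i \<Rightarrow> of_real lam | Leaf s i \<Rightarrow> 1)"

definition W' :: "real \<Rightarrow> dsvtx \<Rightarrow> complex" where
  "W' lam v = (case v of Cen s \<Rightarrow> (if s then -1 else 1) * of_real (lam^2 - 1)
      | Mid s i \<Rightarrow> (if s then 1 else -1) * of_real lam | Leaf s i \<Rightarrow> (if s then -1 else 1))"

lemma eig_W:
  assumes c: "cp l lam = 0" and y: "y \<in> dss_vertices l l"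
  shows "(\<Sum>z\<in>dss_vertices l l. dss_adj l l y z * W lam z) = of_real lam * W lam y"
proof -
  have h: "(lam^2-1) + real l * lam = lam*(lam^2-1)" using c by (simp add: cp_def algebra_simps power2_eq_square power3_eq_cube)
  have hr: "lam * (lam * lam) = lam * lam + real l * lam + lam - 1" using c by (simp add: cp_def algebra_simps power2_eq_square power3_eq_cube)
  have h': "complex_of_real lam * (complex_of_real lam * complex_of_real lam) = complex_of_real lam * complex_of_real lam + of_nat l * complex_of_real lam + complex_of_real lam - 1"
    using arg_cong[OF hr, of complex_of_real] by simp
  show ?thesis unfolding nbr_sum[OF y]
    by (cases y) (simp_all add: W_def h' power2_eq_square algebra_simps)
qed

lemma eig_W':
  assumes c: "cp l lam = 0" and y: "y \<in> dss_vertices l l"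
  shows "(\<Sum>z\<in>dss_vertices l l. dss_adj l l y z * W' lam z) = of_real (- lam) * W' lam y"
proof -
  have h: "(lam^2-1) + real l * lam = lam*(lam^2-1)" using c by (simp add: cp_def algebra_simps power2_eq_square power3_eq_cube)
  have hr: "lam * (lam * lam) = lam * lam + real l * lam + lam - 1" using c by (simp add: cp_def algebra_simps power2_eq_square power3_eq_cube)
  have h': "complex_of_real lam * (complex_of_real lam * complex_of_real lam) = complex_of_real lam * complex_of_real lam + of_nat l * complex_of_real lam + complex_of_real lam - 1"
    using arg_cong[OF hr, of complex_of_real] by simp
  show ?thesis unfolding nbr_sum[OF y]
    by (cases y) (auto simp add: W'_def h' power2_eq_square algebra_simps)
qed

lemma swap_lin:
  fixes A :: "'v \<Rightarrow> complex"
  shows "(\<Sum>z\<in>V. A z * ((\<Sum>j\<in>J. c j * G j z) + (\<Sum>j\<in>J. d j * H j z))) =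
    (\<Sum>j\<in>J. c j * (\<Sum>z\<in>V. A z * G j z)) + (\<Sum>j\<in>J. d j * (\<Sum>z\<in>V. A z * H j z))"
  by (simp add: distrib_left sum.distrib sum_distrib_left sum.swap[of _ V] mult_ac)

lemma mat_pow_formula:
  fixes lam kap :: "nat \<Rightarrow> real"
  assumes roots: "\<And>j. j < 3 \<Longrightarrow> cp l (lam j) = 0"
    and k0: "kap 0 + kap 1 + kap 2 = 0"
    and k1: "kap 0 * lam 0 + kap 1 * lam 1 + kap 2 * lam 2 = 0"
    and k2: "kap 0 * lam 0^2 + kap 1 * lam 1^2 + kap 2 * lam 2^2 = 1"
    and y: "y \<in> dss_vertices l l"
  shows "mat_pow (dss_vertices l l) (dss_adj l l) n y (Cen False) =
     (\<Sum>j<3. of_real (kap j / 2 * lam j ^ n) * W (lam j) y) + (\<Sum>j<3. of_real (kap j / 2 * (- lam j) ^ n) * W' (lam j) y)"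
  using y
proof (induction n arbitrary: y)
  case 0
  have k0': "complex_of_real (kap 0) + of_real (kap 1) + of_real (kap 2) = 0"
    using arg_cong[OF k0, of complex_of_real] by simp
  have k1': "complex_of_real (kap 0) * of_real (lam 0) + of_real (kap 1) * of_real (lam 1) + of_real (kap 2) * of_real (lam 2) = 0"
    using arg_cong[OF k1, of complex_of_real] by simp
  have k2': "complex_of_real (kap 0) * of_real (lam 0^2 - 1) + of_real (kap 1) * of_real (lam 1^2 - 1) + of_real (kap 2) * of_real (lam 2^2 - 1) = 1"
    using arg_cong[OF k2, of complex_of_real] k0' by (simp add: algebra_simps)
  show ?case
  proof (cases y)
    case (Cen s)
    then show ?thesis using k2' by (cases s) (simp_all add: W_def W'_def numeral_3_eq_3 numeral_2_eq_2 algebra_simps)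
  next
    case (Mid s i)
    then show ?thesis using k1' by (cases s) (simp_all add: W_def W'_def numeral_3_eq_3 numeral_2_eq_2 algebra_simps)
  next
    case (Leaf s i)
    then show ?thesis using k0' by (cases s) (simp_all add: W_def W'_def numeral_3_eq_3 numeral_2_eq_2 algebra_simps)
  qed
next
  case (Suc n)
  let ?V = "dss_vertices l l"
  have "mat_pow ?V (dss_adj l l) (Suc n) y (Cen False) =
     (\<Sum>z\<in>?V. dss_adj l l y z * ((\<Sum>j<3. of_real (kap j / 2 * lam j ^ n) * W (lam j) z) + (\<Sum>j<3. of_real (kap j / 2 * (- lam j) ^ n) * W' (lam j) z)))"
    by (simp add: Suc.IH)
  also have "\<dots> = (\<Sum>j<3. of_real (kap j / 2 * lam j ^ n) * (\<Sum>z\<in>?V. dss_adj l l y z * W (lam j) z))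
     + (\<Sum>j<3. of_real (kap j / 2 * (- lam j) ^ n) * (\<Sum>z\<in>?V. dss_adj l l y z * W' (lam j) z))"
    by (rule swap_lin)
  also have "\<dots> = (\<Sum>j<3. of_real (kap j / 2 * lam j ^ Suc n) * W (lam j) y) + (\<Sum>j<3. of_real (kap j / 2 * (- lam j) ^ Suc n) * W' (lam j) y)"
    by (intro arg_cong2[where f="(+)"] sum.cong refl)
       (simp_all add: eig_W[OF roots Suc.prems] eig_W'[OF roots Suc.prems])
  finally show ?case .
qed


lemma exp_sums:
  "(\<lambda>n. (\<i> * of_real t)^n / fact n * (of_real (c * \<mu>^n) * w)) sums (of_real c * exp (\<i> * of_real t * of_real \<mu>) * w)"
proof -
  have "(\<lambda>n. (\<i> * of_real t * of_real \<mu>)^n /\<^sub>R fact n) sums exp (\<i> * of_real t * of_real \<mu>)"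
    by (rule exp_converges)
  hence "(\<lambda>n. (\<i> * of_real t * of_real \<mu>)^n /\<^sub>R fact n * (of_real c * w)) sums (exp (\<i> * of_real t * of_real \<mu>) * (of_real c * w))"
    by (rule sums_mult2)
  moreover have "(\<lambda>n. (\<i> * of_real t * of_real \<mu>)^n /\<^sub>R fact n * (of_real c * w)) = (\<lambda>n. (\<i> * of_real t)^n / fact n * (of_real (c * \<mu>^n) * w))"
    by (rule ext) (simp add: scaleR_conv_of_real power_mult_distrib divide_inverse mult_ac)
  ultimately show ?thesis by (simp add: mult_ac)
qed

lemma trans_formula:
  fixes lam kap :: "nat \<Rightarrow> real"
  assumes roots: "\<And>j. j < 3 \<Longrightarrow> cp l (lam j) = 0"
    and k0: "kap 0 + kap 1 + kap 2 = 0"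
    and k1: "kap 0 * lam 0 + kap 1 * lam 1 + kap 2 * lam 2 = 0"
    and k2: "kap 0 * lam 0^2 + kap 1 * lam 1^2 + kap 2 * lam 2^2 = 1"
    and y: "y \<in> dss_vertices l l"
  shows "trans_mat (dss_vertices l l) (dss_adj l l) t y (Cen False) =
     (\<Sum>j<3. of_real (kap j / 2) * exp (\<i> * of_real t * of_real (lam j)) * W (lam j) y)
   + (\<Sum>j<3. of_real (kap j / 2) * exp (\<i> * of_real t * of_real (- lam j)) * W' (lam j) y)"
proof -
  have "(\<lambda>n. (\<i> * of_real t)^n / fact n * mat_pow (dss_vertices l l) (dss_adj l l) n y (Cen False))
     = (\<lambda>n. (\<Sum>j<3. (\<i> * of_real t)^n / fact n * (of_real (kap j / 2 * lam j ^ n) * W (lam j) y))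
         + (\<Sum>j<3. (\<i> * of_real t)^n / fact n * (of_real (kap j / 2 * (- lam j) ^ n) * W' (lam j) y)))"
    by (rule ext) (simp add: mat_pow_formula[OF roots k0 k1 k2 y] distrib_left sum_distrib_left)
  moreover have "\<dots> sums ((\<Sum>j<3. of_real (kap j / 2) * exp (\<i> * of_real t * of_real (lam j)) * W (lam j) y)
   + (\<Sum>j<3. of_real (kap j / 2) * exp (\<i> * of_real t * of_real (- lam j)) * W' (lam j) y))"
    by (intro sums_add sums_sum exp_sums)
  ultimately show ?thesis unfolding trans_mat_def by (simp add: sums_unique[symmetric])
qed

lemma cp_no_rat_root:
  assumes "l \<ge> 1" "x \<in> \<rat>" shows "cp l x \<noteq> 0"
proof
  assume h: "cp l x = 0"
  obtain a b :: int where ab: "b > 0" "coprime a b" "x = of_int a / of_int b"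
    using Rats_cases'[OF assms(2)] by blast
  have "real_of_int b ^ 3 * cp l x = of_int (a^3 - a^2*b - (int l + 1)*a*b^2 + b^3)"
    using ab(1) by (simp add: cp_def ab(3) field_simps power3_eq_cube power2_eq_square)
  with h have e: "a^3 - a^2*b - (int l + 1)*a*b^2 + b^3 = 0"
    by (metis of_int_eq_0_iff mult_zero_right)
  have e1: "a^3 = b * (a^2 + (int l + 1)*a*b - b^2)" using e by (simp add: algebra_simps power2_eq_square power3_eq_cube)
  have "b dvd a^3" unfolding e1 by simp
  moreover have "coprime (a^3) b" using ab(2) by simp
  ultimately have "is_unit b" using coprime_absorb_right[of b "a^3"] by simp
  hence b1: "b = 1" using ab(1) by auto
  have e2: "a * ((int l + 1) + a - a^2) = 1" using e b1 by (simp add: algebra_simps power2_eq_square power3_eq_cube)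
  hence "is_unit a" by (metis dvd_triv_left)
  hence "a = 1 \<or> a = -1" by (simp add: zdvd1_eq abs_if split: if_splits) 
  thus False
  proof
    assume "a = 1" with e2 assms(1) show False by simp
  next
    assume "a = -1" with e2 assms(1) show False by (simp add: algebra_simps)
  qed
qed

lemma cp_quad_zero:
  assumes l: "l \<ge> 1" and x: "cp l x = 0" and r: "a2 \<in> \<rat>" "a1 \<in> \<rat>" "a0 \<in> \<rat>"
    and e: "a2 * x^2 + a1 * x + a0 = 0"
  shows "a2 = 0 \<and> a1 = 0 \<and> a0 = 0"
proof -
  have xnq: "x \<notin> \<rat>" using cp_no_rat_root[OF l] x by blast
  have lin: "u = 0 \<and> v = 0" if "u \<in> \<rat>" "v \<in> \<rat>" "u * x + v = 0" for u v
  proof (cases "u = 0")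
    case True then show ?thesis using that by simp
  next
    case False
    hence "x = - v / u" using that(3) by (simp add: field_simps eq_neg_iff_add_eq_0)
    hence "x \<in> \<rat>" using that(1,2) by simp
    thus ?thesis using xnq by blast
  qed
  show ?thesis
  proof (cases "a2 = 0")
    case True
    then show ?thesis using lin[OF r(2,3)] e by simp
  next
    case False
    define \<beta> where "\<beta> = a1 / a2"
    define \<gamma> where "\<gamma> = a0 / a2"
    have bq: "\<beta> \<in> \<rat>" "\<gamma> \<in> \<rat>" using r by (simp_all add: \<beta>_def \<gamma>_def)
    have qz: "x^2 + \<beta> * x + \<gamma> = 0" using e False
      by (simp add: \<beta>_def \<gamma>_def field_simps)
    have idp: "cp l X = (X^2 + \<beta> * X + \<gamma>) * (X - 1 - \<beta>)
        + (- (real l + 1) - \<gamma> + \<beta> + \<beta>^2) * X + (1 + \<gamma> * (1 + \<beta>))" for X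
      by (simp add: cp_def algebra_simps power2_eq_square power3_eq_cube)
    have "(- (real l + 1) - \<gamma> + \<beta> + \<beta>^2) * x + (1 + \<gamma> * (1 + \<beta>)) = 0"
      using idp[of x] x qz by simp
    moreover have "(- (real l + 1) - \<gamma> + \<beta> + \<beta>^2) \<in> \<rat>" "(1 + \<gamma> * (1 + \<beta>)) \<in> \<rat>"
      using bq by simp_all
    ultimately have z: "(- (real l + 1) - \<gamma> + \<beta> + \<beta>^2) = 0" "(1 + \<gamma> * (1 + \<beta>)) = 0"
      using lin by blast+
    have "cp l (1 + \<beta>) = 0" using idp[of "1 + \<beta>"] z by simp
    moreover have "1 + \<beta> \<in> \<rat>" using bq by simp
    ultimately show ?thesis using cp_no_rat_root[OF l] by blast
  qed
qed

lemma cp_affine: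
  assumes l: "l \<ge> 1" and x: "cp l x = 0" and y: "cp l y = 0" and ne: "x \<noteq> y"
    and q: "q \<in> \<rat>" and r: "r \<in> \<rat>" and yx: "y = q + r * x"
  shows False
proof -
  define a2 where "a2 = r^2 * (3*q - 1 + r)"
  define a1 where "a1 = r * (3*q^2 - 2*q - (real l + 1) + r^2 * (real l + 1))"
  define a0 where "a0 = q^3 - q^2 - (real l + 1)*q + 1 - r^3"
  have "cp l (q + r*x) - r^3 * cp l x = a2 * x^2 + a1 * x + a0"
    by (simp add: cp_def a2_def a1_def a0_def algebra_simps power2_eq_square power3_eq_cube)
  hence "a2 * x^2 + a1 * x + a0 = 0" using x y yx by simp
  moreover have "a2 \<in> \<rat>" "a1 \<in> \<rat>" "a0 \<in> \<rat>" using q r by (simp_all add: a2_def a1_def a0_def)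
  ultimately have z: "a2 = 0" "a1 = 0" "a0 = 0" using cp_quad_zero[OF l x] by blast+
  have r0: "r \<noteq> 0"
  proof
    assume "r = 0"
    hence "y \<in> \<rat>" using yx q by simp
    thus False using cp_no_rat_root[OF l] y by blast
  qed
  hence r1: "r = 1 - 3*q" using z(1) by (simp add: a2_def)
  have "3*q^2 - 2*q - (real l + 1) + r^2 * (real l + 1) = 0" using z(2) r0 by (simp add: a1_def)
  hence "q * (3*q - 2) * (3 * real l + 4) = 0" unfolding r1 by (simp add: algebra_simps power2_eq_square)
  hence "q = 0 \<or> 3*q - 2 = 0" using l by auto
  thus False
  proof
    assume "q = 0" hence "r = 1" using r1 by simp
    thus False using yx ne \<open>q = 0\<close> by simp
  next
    assume q2: "3*q - 2 = 0"
    hence "q = 2/3" by simp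
    hence "r = -1" using r1 by simp
    hence "9 * (real l + 1) = 25" using z(3) \<open>q = 2/3\<close> by (simp add: a0_def power2_eq_square power3_eq_cube field_simps)
    hence "9 * (l + 1) = (25::nat)" by (metis of_nat_eq_iff of_nat_numeral of_nat_mult of_nat_add of_nat_1)
    thus False by presburger
  qed
qed

lemma cp_indep:
  assumes l: "l \<ge> 1" and x: "cp l x = 0" and y: "cp l y = 0" and ne: "x \<noteq> y"
    and e: "real_of_int A * x + real_of_int B * y + real_of_int C = 0"
  shows "A = 0 \<and> B = 0 \<and> C = 0"
proof (cases "B = 0")
  case False
  have "y = (- of_int C / of_int B) + (- of_int A / of_int B) * x"
    using e False by (simp add: field_simps)
  moreover have "- of_int C / of_int B \<in> (\<rat>::real set)" "- of_int A / of_int B \<in> (\<rat>::real set)" by simp_all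
  ultimately show ?thesis using cp_affine[OF l x y ne] by blast
next
  case True
  show ?thesis
  proof (cases "A = 0")
    case True then show ?thesis using e \<open>B = 0\<close> by simp
  next
    case False
    have "x = - of_int C / of_int A" using e False \<open>B = 0\<close> by (simp add: field_simps)
    hence "x \<in> \<rat>" by simp
    thus ?thesis using cp_no_rat_root[OF l] x by blast
  qed
qed


lemma lim_exp:
  assumes d: "d \<longlonglongrightarrow> 0" and e: "\<And>j. \<tau> j * lam = 2*pi*(d j + of_int (m j) + 1/4)"
  shows "(\<lambda>j. exp (\<i> * of_real (\<tau> j) * of_real lam)) \<longlonglongrightarrow> \<i>"
    and "(\<lambda>j. exp (\<i> * of_real (\<tau> j) * of_real (- lam))) \<longlonglongrightarrow> - \<i>"
proof -
  have eq: "exp (\<i> * of_real (\<tau> j) * of_real lam) = cis (2*pi*d j) * \<i>" for j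
  proof -
    have "exp (\<i> * of_real (\<tau> j) * of_real lam) = cis (\<tau> j * lam)"
      by (simp add: cis_conv_exp mult_ac)
    also have "\<tau> j * lam = 2*pi*d j + 2 * pi * of_int (m j) + pi/2" using e[of j] by (simp add: algebra_simps)
    also have "cis \<dots> = cis (2*pi*d j) * cis (2 * pi * of_int (m j)) * cis (pi/2)" by (simp only: cis_mult)
    also have "cis (2 * pi * of_int (m j)) = 1" by (rule cis_multiple_2pi) simp
    finally show ?thesis by simp
  qed
  have c: "(\<lambda>j. cis (2*pi*d j)) \<longlonglongrightarrow> cis (2*pi*0)"
    by (intro tendsto_intros d)
  show 1: "(\<lambda>j. exp (\<i> * of_real (\<tau> j) * of_real lam)) \<longlonglongrightarrow> \<i>"
    unfolding eq using tendsto_mult_right[OF c, of \<i>] by simp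
  have eq2: "exp (\<i> * of_real (\<tau> j) * of_real (- lam)) = inverse (exp (\<i> * of_real (\<tau> j) * of_real lam))" for j
    by (simp add: exp_minus[symmetric])
  show "(\<lambda>j. exp (\<i> * of_real (\<tau> j) * of_real (- lam))) \<longlonglongrightarrow> - \<i>"
    unfolding eq2 using tendsto_inverse[OF 1] by simp
qed

lemma lim_value:
  fixes lam kap :: "nat \<Rightarrow> real"
  assumes k0: "kap 0 + kap 1 + kap 2 = 0"
    and k1: "kap 0 * lam 0 + kap 1 * lam 1 + kap 2 * lam 2 = 0"
    and k2: "kap 0 * lam 0^2 + kap 1 * lam 1^2 + kap 2 * lam 2^2 = 1"
  shows "(\<Sum>j<3. of_real (kap j / 2) * \<i> * W (lam j) y) + (\<Sum>j<3. of_real (kap j / 2) * (- \<i>) * W' (lam j) y)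
     = (if y = Cen True then \<i> else 0)"
proof -
  have k0': "complex_of_real (kap 0) + of_real (kap 1) + of_real (kap 2) = 0"
    using arg_cong[OF k0, of complex_of_real] by simp
  have k1': "complex_of_real (kap 0) * of_real (lam 0) + of_real (kap 1) * of_real (lam 1) + of_real (kap 2) * of_real (lam 2) = 0"
    using arg_cong[OF k1, of complex_of_real] by simp
  have k2': "complex_of_real (kap 0) * of_real (lam 0^2 - 1) + of_real (kap 1) * of_real (lam 1^2 - 1) + of_real (kap 2) * of_real (lam 2^2 - 1) = 1"
    using arg_cong[OF k2, of complex_of_real] k0' by (simp add: algebra_simps)
  let ?L = "(\<Sum>j<3. of_real (kap j / 2) * \<i> * W (lam j) y) + (\<Sum>j<3. of_real (kap j / 2) * (- \<i>) * W' (lam j) y)"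
  show ?thesis
  proof (cases y)
    case (Cen s)
    show ?thesis
    proof (cases s)
      case True
      have "?L = \<i> * (complex_of_real (kap 0) * of_real (lam 0^2 - 1) + of_real (kap 1) * of_real (lam 1^2 - 1) + of_real (kap 2) * of_real (lam 2^2 - 1))"
        using Cen True by (simp add: W_def W'_def numeral_3_eq_3 eval_nat_numeral) (simp add: field_simps)
      then show ?thesis using k2' Cen True by simp
    next
      case False
      then show ?thesis using Cen by (simp add: W_def W'_def numeral_3_eq_3 algebra_simps)
    qed
  next
    case (Mid s i)
    have "?L = (if s then 0 else \<i>) * (complex_of_real (kap 0) * of_real (lam 0) + of_real (kap 1) * of_real (lam 1) + of_real (kap 2) * of_real (lam 2))"
      using Mid by (cases s) (simp_all add: W_def W'_def numeral_3_eq_3 eval_nat_numeral, simp_all add: field_simps)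
    then show ?thesis using k1' Mid by simp
  next
    case (Leaf s i)
    have "?L = (if s then \<i> else 0) * (complex_of_real (kap 0) + of_real (kap 1) + of_real (kap 2))"
      using Leaf by (cases s) (simp_all add: W_def W'_def numeral_3_eq_3 eval_nat_numeral, simp_all add: field_simps)
    then show ?thesis using k0' Leaf by simp
  qed
qed


lemma cp_Q:
  assumes "cp l a = 0" "cp l b = 0" "a \<noteq> b"
  shows "a^2 + a*b + b^2 - a - b - (real l + 1) = 0"
proof -
  have "(a - b) * (a^2 + a*b + b^2 - a - b - (real l + 1)) = cp l a - cp l b"
    by (simp add: cp_def algebra_simps power2_eq_square power3_eq_cube)
  thus ?thesis using assms by simp
qed

lemma lagrange:
  fixes a b c :: real
  assumes "a \<noteq> b" "a \<noteq> c" "b \<noteq> c"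
  shows "1/((a-b)*(a-c)) + 1/((b-a)*(b-c)) + 1/((c-a)*(c-b)) = 0"
    and "1/((a-b)*(a-c)) * a + 1/((b-a)*(b-c)) * b + 1/((c-a)*(c-b)) * c = 0"
    and "1/((a-b)*(a-c)) * a^2 + 1/((b-a)*(b-c)) * b^2 + 1/((c-a)*(c-b)) * c^2 = 1"
proof -
  have d: "a - b \<noteq> 0" "a - c \<noteq> 0" "b - c \<noteq> 0" using assms by auto
  have e1: "1/((b-a)*(b-c)) = - 1/((a-b)*(b-c))" "1/((c-a)*(c-b)) = 1/((a-c)*(b-c))"
    by (simp_all add: divide_simps algebra_simps)
  show "1/((a-b)*(a-c)) + 1/((b-a)*(b-c)) + 1/((c-a)*(c-b)) = 0"
    unfolding e1 using d by (simp add: divide_simps; simp add: algebra_simps)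
  show "1/((a-b)*(a-c)) * a + 1/((b-a)*(b-c)) * b + 1/((c-a)*(c-b)) * c = 0"
    unfolding e1 using d by (simp add: divide_simps; simp add: algebra_simps)
  show "1/((a-b)*(a-c)) * a^2 + 1/((b-a)*(b-c)) * b^2 + 1/((c-a)*(c-b)) * c^2 = 1"
    unfolding e1 using d by (simp add: divide_simps; simp add: algebra_simps power2_eq_square)
qed

theorem theorem3p2:
  fixes l :: nat
  assumes "l \<ge> 1"
  shows "\<exists>(\<tau> :: nat \<Rightarrow> real) (\<gamma> :: complex).
           (\<forall>k. \<exists>n::int. \<tau> k = (4 * of_int n - 1) * pi / 2) \<and>
           pgst_along (dss_vertices l l) (dss_adj l l) (Cen False) (Cen True) \<tau> \<gamma>"
proof -
  note l = assms
  define M where "M = real l + 2"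
  have M3: "M \<ge> 3" using l by (simp add: M_def)
  have cpc: "continuous_on S (cp l)" for S unfolding cp_def by (intro continuous_intros)
  have cpm: "cp l (-M) \<le> 0"
  proof -
    have "cp l (-M) = -(M^3 + M - 1)" by (simp add: cp_def M_def algebra_simps power2_eq_square power3_eq_cube)
    moreover have "M^3 \<ge> 0" using M3 by simp
    ultimately show ?thesis using M3 by linarith
  qed
  have cpM: "cp l M \<ge> 0"
  proof -
    have "cp l M = M * (M - 1)^2 + 1" by (simp add: cp_def M_def algebra_simps power2_eq_square power3_eq_cube)
    moreover have "M * (M - 1)^2 \<ge> 0" using M3 by simp
    ultimately show ?thesis by simp
  qed
  have cp0: "cp l 0 = 1" by (simp add: cp_def)
  have cp1: "cp l 1 = - real l" by (simp add: cp_def)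
  obtain x0 where x0: "-M \<le> x0" "x0 \<le> 0" "cp l x0 = 0"
    using IVT'[of "cp l" "-M" 0 0] cpm cp0 cpc M3 by auto
  obtain x1 where x1: "0 \<le> x1" "x1 \<le> 1" "cp l x1 = 0"
    using IVT2'[of "cp l" 1 0 0] cp1 cp0 cpc by auto
  obtain x2 where x2: "1 \<le> x2" "x2 \<le> M" "cp l x2 = 0"
    using IVT'[of "cp l" 1 0 M] cpM cp1 cpc M3 by auto
  have "x0 \<noteq> 0" "x1 \<noteq> 0" using x0 x1 cp0 by auto
  moreover have "x1 \<noteq> 1" "x2 \<noteq> 1" using x1 x2 cp1 l by auto
  ultimately have lt: "x0 < 0" "0 < x1" "x1 < 1" "1 < x2" using x0 x1 x2 by auto
  have vieta: "x0 + x1 + x2 = 1"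
  proof -
    have "x1^2 + x1*x0 + x0^2 - x1 - x0 - (real l + 1) = 0" using cp_Q[OF x1(3) x0(3)] lt by simp
    moreover have "x2^2 + x2*x0 + x0^2 - x2 - x0 - (real l + 1) = 0" using cp_Q[OF x2(3) x0(3)] lt by simp
    ultimately have "(x1 - x2) * (x0 + x1 + x2 - 1) = 0" by (simp add: algebra_simps power2_eq_square)
    thus ?thesis using lt by simp
  qed
  define lam :: "nat \<Rightarrow> real" where "lam j = (if j = 0 then x0 else if j = 1 then x1 else x2)" for j
  define kap :: "nat \<Rightarrow> real" where "kap j = (if j = 0 then 1/((x0-x1)*(x0-x2)) else if j = 1 then 1/((x1-x0)*(x1-x2)) else 1/((x2-x0)*(x2-x1)))" for j
  have ne: "x0 \<noteq> x1" "x0 \<noteq> x2" "x1 \<noteq> x2" using lt by auto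
  have k0: "kap 0 + kap 1 + kap 2 = 0" and k1: "kap 0 * lam 0 + kap 1 * lam 1 + kap 2 * lam 2 = 0"
    and k2: "kap 0 * lam 0^2 + kap 1 * lam 1^2 + kap 2 * lam 2^2 = 1"
    using lagrange[OF ne] by (simp_all add: kap_def lam_def)
  have roots: "cp l (lam j) = 0" if "j < 3" for j
    using x0 x1 x2 by (simp add: lam_def)
  define \<theta> :: "nat \<Rightarrow> real" where "\<theta> i = (if i = 0 then x0 else if i = 1 then x1 else 1)" for i
  define \<alpha> :: "nat \<Rightarrow> real" where "\<alpha> i = \<theta> i / 4 + 1/4" for i
  have th_img: "\<theta> ` {..2} = {x0, x1, 1}"
  proof -
    have "{..2::nat} = {0,1,2}" by auto
    thus ?thesis by (auto simp: \<theta>_def)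
  qed
  have inj: "inj_on \<theta> {..2}"
    unfolding inj_on_def \<theta>_def using lt by auto
  have th2: "\<theta> 2 = 1" by (simp add: \<theta>_def)
  interpret m: Modules.module "(\<lambda>r. (*) (real_of_int r))"
    by (simp add: Modules.module.intro distrib_left mult.commute)
  have indp: "module.independent (\<lambda>r x. of_int r * x) (\<theta> ` {..2})"
    unfolding th_img m.independent_explicit_module
  proof (intro allI impI)
    fix t :: "real set" and u :: "real \<Rightarrow> int" and v
    assume t: "finite t" "t \<subseteq> {x0, x1, 1}" "(\<Sum>v\<in>t. real_of_int (u v) * v) = 0" "v \<in> t"
    define A where "A = (if x0 \<in> t then u x0 else 0)"
    define B where "B = (if x1 \<in> t then u x1 else 0)"
    define C where "C = (if 1 \<in> t then u 1 else 0)"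
    have "(\<Sum>v\<in>t. real_of_int (u v) * v) = (\<Sum>v\<in>{x0,x1,1}. if v \<in> t then real_of_int (u v) * v else 0)"
    proof -
      have "{x0,x1,1} \<inter> t = t" using t(2) by blast
      hence "(\<Sum>v\<in>t. real_of_int (u v) * v) = (\<Sum>v\<in>{x0,x1,1} \<inter> t. real_of_int (u v) * v)" by simp
      also have "\<dots> = (\<Sum>v\<in>{x0,x1,1}. if v \<in> t then real_of_int (u v) * v else 0)"
        by (rule sum.inter_restrict) simp
      finally show ?thesis .
    qed
    also have "\<dots> = real_of_int A * x0 + real_of_int B * x1 + real_of_int C"
      using lt by (simp add: A_def B_def C_def)
    finally have "real_of_int A * x0 + real_of_int B * x1 + real_of_int C = 0" using t(3) by simp
    hence "A = 0 \<and> B = 0 \<and> C = 0" using cp_indep[OF l x0(3) x1(3) ne(1)] by blast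
    thus "u v = 0" using t(2,4) by (auto simp: A_def B_def C_def)
  qed
  have "\<exists>k m. \<forall>i<2. \<bar>of_int k * \<theta> i - of_int (m i) - \<alpha> i\<bar> < 1 / real (Suc j)" for j
  proof -
    have "(1::real) / real (Suc j) > 0" by simp
    from Kronecker_thm_2[where \<alpha> = \<alpha>, OF indp inj th2 this]
    obtain k m where "\<And>i. i < 2 \<Longrightarrow> \<bar>of_int k * \<theta> i - of_int (m i) - \<alpha> i\<bar> < 1 / real (Suc j)" by blast
    thus ?thesis by blast
  qed
  then obtain K where "\<forall>j. \<exists>m. \<forall>i<2. \<bar>of_int (K j) * \<theta> i - of_int (m i) - \<alpha> i\<bar> < 1 / real (Suc j)"
    using choice[of "\<lambda>j k. \<exists>m. \<forall>i<2. \<bar>of_int k * \<theta> i - of_int (m i) - \<alpha> i\<bar> < 1 / real (Suc j)"] by blast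
  then obtain Mm where KM: "\<And>j i. i < 2 \<Longrightarrow> \<bar>of_int (K j) * \<theta> i - of_int (Mm j i) - \<alpha> i\<bar> < 1 / real (Suc j)"
    using choice[of "\<lambda>j m. \<forall>i<2. \<bar>of_int (K j) * \<theta> i - of_int (m i) - \<alpha> i\<bar> < 1 / real (Suc j)"] by blast
  define \<tau> :: "nat \<Rightarrow> real" where "\<tau> j = (4 * of_int (K j) - 1) * pi / 2" for j
  define d0 where "d0 j = of_int (K j) * x0 - of_int (Mm j 0) - \<alpha> 0" for j
  define d1 where "d1 j = of_int (K j) * x1 - of_int (Mm j 1) - \<alpha> 1" for j
  have d0: "d0 \<longlonglongrightarrow> 0"
    by (rule LIMSEQ_norm_0) (use KM[of 0] in \<open>simp add: d0_def \<theta>_def\<close>)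
  have d1: "d1 \<longlonglongrightarrow> 0"
    by (rule LIMSEQ_norm_0) (use KM[of 1] in \<open>simp add: d1_def \<theta>_def\<close>)
  have d2: "(\<lambda>j. - d0 j - d1 j) \<longlonglongrightarrow> 0"
    using tendsto_diff[OF tendsto_minus[OF d0] d1] by simp
  have e0: "\<tau> j * x0 = 2 * pi * (d0 j + of_int (Mm j 0) + 1/4)" for j
    by (simp add: \<tau>_def d0_def \<alpha>_def \<theta>_def field_simps)
  have e1: "\<tau> j * x1 = 2 * pi * (d1 j + of_int (Mm j 1) + 1/4)" for j
    by (simp add: \<tau>_def d1_def \<alpha>_def \<theta>_def field_simps)
  have e2: "\<tau> j * x2 = 2 * pi * ((- d0 j - d1 j) + of_int (K j - Mm j 0 - Mm j 1 - 1) + 1/4)" for j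
  proof -
    have x2e: "x2 = 1 - x0 - x1" using vieta by simp
    show ?thesis unfolding x2e by (simp add: \<tau>_def d0_def d1_def \<alpha>_def \<theta>_def field_simps)
  qed
  have lims: "(\<lambda>k. exp (\<i> * of_real (\<tau> k) * of_real (lam j))) \<longlonglongrightarrow> \<i> \<and>
              (\<lambda>k. exp (\<i> * of_real (\<tau> k) * of_real (- lam j))) \<longlonglongrightarrow> - \<i>" if j3: "j < 3" for j
  proof -
    have "j = 0 \<or> j = 1 \<or> j = 2" using j3 by auto
    then consider "j = 0" | "j = 1" | "j = 2" by blast
    thus ?thesis
    proof cases
      case 1 thus ?thesis using lim_exp[OF d0 e0] by (simp add: lam_def)
    next
      case 2 thus ?thesis using lim_exp[OF d1 e1] by (simp add: lam_def)
    next
      case 3 thus ?thesis using lim_exp[OF d2 e2] by (simp add: lam_def)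
    qed
  qed
  have "pgst_along (dss_vertices l l) (dss_adj l l) (Cen False) (Cen True) \<tau> \<i>"
    unfolding pgst_along_def
  proof
    fix y assume y: "y \<in> dss_vertices l l"
    have "(\<lambda>k. trans_mat (dss_vertices l l) (dss_adj l l) (\<tau> k) y (Cen False)) =
      (\<lambda>k. (\<Sum>j<3. of_real (kap j / 2) * exp (\<i> * of_real (\<tau> k) * of_real (lam j)) * W (lam j) y)
        + (\<Sum>j<3. of_real (kap j / 2) * exp (\<i> * of_real (\<tau> k) * of_real (- lam j)) * W' (lam j) y))"
      by (rule ext) (rule trans_formula[OF roots k0 k1 k2 y])
    moreover have "\<dots> \<longlonglongrightarrow> (\<Sum>j<3. of_real (kap j / 2) * \<i> * W (lam j) y) + (\<Sum>j<3. of_real (kap j / 2) * (- \<i>) * W' (lam j) y)"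
      by (intro tendsto_add tendsto_sum tendsto_mult tendsto_const conjunct1[OF lims] conjunct2[OF lims]) auto
    ultimately show "(\<lambda>k. trans_mat (dss_vertices l l) (dss_adj l l) (\<tau> k) y (Cen False)) \<longlonglongrightarrow> (if y = Cen True then \<i> else 0)"
      using lim_value[OF k0 k1 k2] by simp
  qed
  moreover have "\<forall>k. \<exists>n::int. \<tau> k = (4 * of_int n - 1) * pi / 2"
    by (auto simp: \<tau>_def)
  ultimately show ?thesis by blast
qed

end
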